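(* There is a constant $c>0$ such that for every interval graph $G=(V,E)$ with $N=|V|\ge 2$ nodes, labeled $v_0,\dots,v_{N-1}$ in increasing order of the left endpoints of their intervals, the minimal $\pi$-OBDD representing $\chi_E$ has at most $c\,N\log N$ nodes, where $\pi$ is the $2$-interleaved variable order with decreasing significance.
   Context: An interval graph on $N$ nodes is given by intervals $[a_i,b_i]$ with $a_i<b_i$, $0\le i\le N-1$; two distinct nodes are adjacent iff their intervals intersect. Without loss of generality all $2N$ endpoints are distinct, so the left endpoints determine a unique labeling $v_0,\dots,v_{N-1}$ with $a_0<a_1<\dots<a_{N-1}$. Let $n=\lceil\log_2 N\rceil$. For $x=(x_0,\dots,x_{n-1})\in\{0,1\}^n$ put $|x|=\sum_{i=0}^{n-1}x_i2^i$. The characteristic function $\chi_E:\{0,1\}^{2n}\to\{0,1\}$ is defined by $\chi_E(x,y)=1$ iff $|x|,|y|<N$ and $\{v_{|x|},v_{|y|}\}\in E$. A $\pi$-OBDD for a variable order $\pi$ (a linear order of the input variables) is a directed acyclic rooted graph with two sinks labeled $0$ and $1$. Every inner node is labeled by a variable and has two outgoing edges labeled $0$ and $1$, and along every edge the variables respect $\pi$. An assignment determines a path from the root by following, at each node labeled $x_i$, the edge labeled by the value of $x_i$. The OBDD represents $f$ if this path always ends in the sink labeled $f(\text{assignment})$. The size of an OBDD is its number of nodes. The $2$-interleaved variable order with decreasing significance on $x,y\in\{0,1\}^n$ is $(x_{n-1},y_{n-1},x_{n-2},y_{n-2},\dots,x_0,y_0)$. *)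

theory Defs
  imports Complex_Main
begin

text \<open>A node u with obdd_var B u = None is a sink labelled obdd_sink B u; a node with
obdd_var B u = Some v is an inner node labelled by variable v with 0-successor
obdd_lo B u and 1-successor obdd_hi B u.\<close>

record obdd =
  obdd_nodes :: "nat set"
  obdd_root :: nat
  obdd_var :: "nat \<Rightarrow> nat option"
  obdd_lo :: "nat \<Rightarrow> nat"
  obdd_hi :: "nat \<Rightarrow> nat"
  obdd_sink :: "nat \<Rightarrow> bool"

definition is_pi_obdd :: "nat list \<Rightarrow> obdd \<Rightarrow> bool" where
  "is_pi_obdd vo B \<longleftrightarrow>
     distinct vo \<and>
     finite (obdd_nodes B) \<and> obdd_root B \<in> obdd_nodes B \<and>
     (\<forall>u\<in>obdd_nodes B. \<forall>w\<in>obdd_nodes B.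
        obdd_var B u = None \<and> obdd_var B w = None \<and> obdd_sink B u = obdd_sink B w \<longrightarrow> u = w) \<and>
     (\<forall>u\<in>obdd_nodes B. \<forall>v. obdd_var B u = Some v \<longrightarrow>
        v \<in> set vo \<and> obdd_lo B u \<in> obdd_nodes B \<and> obdd_hi B u \<in> obdd_nodes B \<and>
        (\<forall>w\<in>{obdd_lo B u, obdd_hi B u}. \<forall>v'. obdd_var B w = Some v' \<longrightarrow>
            (\<exists>i j. i < j \<and> j < length vo \<and> vo ! i = v \<and> vo ! j = v')))"

inductive obdd_reach :: "obdd \<Rightarrow> (nat \<Rightarrow> bool) \<Rightarrow> nat \<Rightarrow> bool \<Rightarrow> bool" where
  sink: "obdd_var B u = None \<Longrightarrow> obdd_reach B a u (obdd_sink B u)"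
| inner: "obdd_var B u = Some v \<Longrightarrow>
          obdd_reach B a (if a v then obdd_hi B u else obdd_lo B u) r \<Longrightarrow>
          obdd_reach B a u r"

definition obdd_represents :: "obdd \<Rightarrow> ((nat \<Rightarrow> bool) \<Rightarrow> bool) \<Rightarrow> bool" where
  "obdd_represents B f \<longleftrightarrow> (\<forall>a. obdd_reach B a (obdd_root B) (f a))"

definition obdd_size :: "obdd \<Rightarrow> nat" where
  "obdd_size B = card (obdd_nodes B)"

definition min_obdd_size :: "nat list \<Rightarrow> ((nat \<Rightarrow> bool) \<Rightarrow> bool) \<Rightarrow> nat" where
  "min_obdd_size vo f = (LEAST s. \<exists>B. is_pi_obdd vo B \<and> obdd_represents B f \<and> obdd_size B = s)"

definition interval_rep :: "nat \<Rightarrow> (nat \<Rightarrow> real) \<Rightarrow> (nat \<Rightarrow> real) \<Rightarrow> bool" where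
  "interval_rep N l r \<longleftrightarrow>
     (\<forall>i<N. l i < r i) \<and>
     (\<forall>i<N. \<forall>j<N. i \<noteq> j \<longrightarrow> l i \<noteq> l j \<and> r i \<noteq> r j) \<and>
     (\<forall>i<N. \<forall>j<N. l i \<noteq> r j) \<and>
     (\<forall>i<N. \<forall>j<N. i < j \<longrightarrow> l i < l j)"

definition interval_adj :: "(nat \<Rightarrow> real) \<Rightarrow> (nat \<Rightarrow> real) \<Rightarrow> nat \<Rightarrow> nat \<Rightarrow> bool" where
  "interval_adj l r i j \<longleftrightarrow> i \<noteq> j \<and> {l i..r i} \<inter> {l j..r j} \<noteq> {}"

text \<open>n = ceiling(log2 N) bits. Variable k < n is x_k, variable n + k is y_k.\<close>
definition nbits :: "nat \<Rightarrow> nat" where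
  "nbits N = nat \<lceil>log 2 (real N)\<rceil>"

definition bin_val :: "nat \<Rightarrow> (nat \<Rightarrow> bool) \<Rightarrow> nat" where
  "bin_val n x = (\<Sum>i<n. if x i then 2 ^ i else 0)"

definition chi_E :: "nat \<Rightarrow> (nat \<Rightarrow> real) \<Rightarrow> (nat \<Rightarrow> real) \<Rightarrow> (nat \<Rightarrow> bool) \<Rightarrow> bool" where
  "chi_E N l r a \<longleftrightarrow>
     (let n = nbits N; xv = bin_val n a; yv = bin_val n (\<lambda>i. a (n + i))
      in xv < N \<and> yv < N \<and> interval_adj l r xv yv)"

text \<open>2-interleaved order with decreasing significance:
x_{n-1}, y_{n-1}, x_{n-2}, y_{n-2}, ..., x_0, y_0.\<close>
definition interleaved_order :: "nat \<Rightarrow> nat list" where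
  "interleaved_order n = concat (map (\<lambda>k. [k, n + k]) (rev [0..<n]))"

end

theory Submission
  imports Defs "HOL-Library.Nat_Bijection"
begin


definition mrg :: "nat list \<Rightarrow> nat \<Rightarrow> nat set \<Rightarrow> (nat\<Rightarrow>bool) \<Rightarrow> (nat\<Rightarrow>bool)" where
  "mrg vo k S a = (\<lambda>v. if v \<in> set (take k vo) then v \<in> S else a v)"

definition subf :: "nat list \<Rightarrow> ((nat\<Rightarrow>bool)\<Rightarrow>bool) \<Rightarrow> nat \<Rightarrow> nat set \<Rightarrow> (nat\<Rightarrow>bool)\<Rightarrow>bool" where
  "subf vo f k S = (\<lambda>a. f (mrg vo k S a))"

definition canon :: "nat list \<Rightarrow> ((nat\<Rightarrow>bool)\<Rightarrow>bool) \<Rightarrow> nat \<Rightarrow> ((nat\<Rightarrow>bool)\<Rightarrow>bool) \<Rightarrow> nat set" where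
  "canon vo f k g = (SOME T. T \<subseteq> set (take k vo) \<and> subf vo f k T = g)"

definition ndg :: "nat list \<Rightarrow> ((nat\<Rightarrow>bool)\<Rightarrow>bool) \<Rightarrow> nat \<Rightarrow> ((nat\<Rightarrow>bool)\<Rightarrow>bool) \<Rightarrow> nat" where
  "ndg vo f k g = prod_encode (k, set_encode (canon vo f k g))"

definition nd :: "nat list \<Rightarrow> ((nat\<Rightarrow>bool)\<Rightarrow>bool) \<Rightarrow> nat \<Rightarrow> nat set \<Rightarrow> nat" where
  "nd vo f k S = ndg vo f k (subf vo f k S)"

definition mkB :: "nat list \<Rightarrow> ((nat\<Rightarrow>bool)\<Rightarrow>bool) \<Rightarrow> obdd" where
 "mkB vo f = \<lparr> obdd_nodes = (\<Union>k\<in>{..length vo}. nd vo f k ` Pow (set (take k vo))),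
   obdd_root = nd vo f 0 {},
   obdd_var = (\<lambda>u. if fst (prod_decode u) < length vo then Some (vo ! fst (prod_decode u)) else None),
   obdd_lo = (\<lambda>u. nd vo f (Suc (fst (prod_decode u))) (set_decode (snd (prod_decode u)))),
   obdd_hi = (\<lambda>u. nd vo f (Suc (fst (prod_decode u))) (insert (vo ! fst (prod_decode u)) (set_decode (snd (prod_decode u))))),
   obdd_sink = (\<lambda>u. f (mrg vo (length vo) (set_decode (snd (prod_decode u))) (\<lambda>_. False))) \<rparr>"

lemma mkB_simps:
  "obdd_nodes (mkB vo f) = (\<Union>k\<in>{..length vo}. nd vo f k ` Pow (set (take k vo)))"
  "obdd_root (mkB vo f) = nd vo f 0 {}"
  "obdd_var (mkB vo f) u = (if fst (prod_decode u) < length vo then Some (vo ! fst (prod_decode u)) else None)"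
  "obdd_lo (mkB vo f) u = nd vo f (Suc (fst (prod_decode u))) (set_decode (snd (prod_decode u)))"
  "obdd_hi (mkB vo f) u = nd vo f (Suc (fst (prod_decode u))) (insert (vo ! fst (prod_decode u)) (set_decode (snd (prod_decode u))))"
  "obdd_sink (mkB vo f) u = f (mrg vo (length vo) (set_decode (snd (prod_decode u))) (\<lambda>_. False))"
  by (simp_all add: mkB_def)

lemma canon_prop:
  assumes "S \<subseteq> set (take k vo)"
  shows "canon vo f k (subf vo f k S) \<subseteq> set (take k vo) \<and> subf vo f k (canon vo f k (subf vo f k S)) = subf vo f k S"
  unfolding canon_def by (rule someI[of _ S]) (use assms in auto)

lemma decode_nd:
  assumes "S \<subseteq> set (take k vo)"
  shows "prod_decode (nd vo f k S) = (k, set_encode (canon vo f k (subf vo f k S)))"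
    and "set_decode (snd (prod_decode (nd vo f k S))) = canon vo f k (subf vo f k S)"
proof -
  show "prod_decode (nd vo f k S) = (k, set_encode (canon vo f k (subf vo f k S)))"
    by (simp add: nd_def ndg_def)
  have "finite (canon vo f k (subf vo f k S))"
    using canon_prop[OF assms] by (meson finite_set finite_subset)
  then show "set_decode (snd (prod_decode (nd vo f k S))) = canon vo f k (subf vo f k S)"
    by (simp add: nd_def ndg_def)
qed

lemma nd_canon:
  assumes "S \<subseteq> set (take k vo)"
  shows "nd vo f k (canon vo f k (subf vo f k S)) = nd vo f k S"
  using canon_prop[OF assms] by (simp add: nd_def)

lemma notin_take:
  assumes "distinct vo" "k < length vo"
  shows "vo ! k \<notin> set (take k vo)"
proof
  assume "vo ! k \<in> set (take k vo)"
  then obtain i where "i < length (take k vo)" "take k vo ! i = vo ! k" by (auto simp: in_set_conv_nth)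
  then have "i < k" "vo ! i = vo ! k" by auto
  with assms show False using nth_eq_iff_index_eq by fastforce
qed

lemma set_take_Suc:
  assumes "k < length vo"
  shows "set (take (Suc k) vo) = insert (vo ! k) (set (take k vo))"
  using assms by (simp add: take_Suc_conv_app_nth)

lemma mrg_step:
  assumes "distinct vo" "k < length vo" "T \<subseteq> set (take k vo)"
  shows "mrg vo (Suc k) (if a (vo ! k) then insert (vo ! k) T else T) a = mrg vo k T a"
  using notin_take[OF assms(1,2)] assms(3) set_take_Suc[OF assms(2)]
  by (auto simp: mrg_def fun_eq_iff)

definition dep :: "nat list \<Rightarrow> ((nat\<Rightarrow>bool)\<Rightarrow>bool) \<Rightarrow> bool" where
  "dep vo f \<longleftrightarrow> (\<forall>a b. (\<forall>v\<in>set vo. a v = b v) \<longrightarrow> f a = f b)"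

lemma subf_const:
  assumes "dep vo f"
  shows "subf vo f (length vo) S a = f (mrg vo (length vo) S (\<lambda>_. False))"
proof -
  have "\<forall>v\<in>set vo. mrg vo (length vo) S a v = mrg vo (length vo) S (\<lambda>_. False) v"
    by (simp add: mrg_def)
  then show ?thesis using assms unfolding dep_def subf_def by blast
qed

lemma reach:
  assumes "distinct vo" "dep vo f" "d \<le> length vo" "S \<subseteq> set (take (length vo - d) vo)"
  shows "obdd_reach (mkB vo f) a (nd vo f (length vo - d) S) (subf vo f (length vo - d) S a)"
  using assms(3,4)
proof (induction d arbitrary: S)
  case 0
  let ?L = "length vo"
  let ?c = "canon vo f ?L (subf vo f ?L S)"
  have cp: "?c \<subseteq> set (take ?L vo)" "subf vo f ?L ?c = subf vo f ?L S"
    using canon_prop[of S ?L vo f] 0 by auto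
  have "obdd_reach (mkB vo f) a (nd vo f ?L S) (obdd_sink (mkB vo f) (nd vo f ?L S))"
    by (rule obdd_reach.sink) (use 0 in \<open>simp add: mkB_simps decode_nd\<close>)
  moreover have "obdd_sink (mkB vo f) (nd vo f ?L S) = subf vo f ?L S a"
    using 0 decode_nd(2)[of S ?L vo f] cp subf_const[OF assms(2)]
    by (simp add: mkB_simps) (metis)
  ultimately show ?case by simp
next
  case (Suc d)
  let ?L = "length vo"
  define k where "k = ?L - Suc d"
  have kL: "k < ?L" and k1: "Suc k = ?L - d" using Suc.prems unfolding k_def by auto
  let ?c = "canon vo f k (subf vo f k S)"
  have S: "S \<subseteq> set (take k vo)" using Suc.prems k_def by simp
  have cp: "?c \<subseteq> set (take k vo)" "subf vo f k ?c = subf vo f k S"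
    using canon_prop[OF S] by auto
  define S' where "S' = (if a (vo ! k) then insert (vo ! k) ?c else ?c)"
  have S'sub: "S' \<subseteq> set (take (?L - d) vo)"
    using cp(1) set_take_Suc[OF kL] k1 unfolding S'_def by auto
  have IH: "obdd_reach (mkB vo f) a (nd vo f (Suc k) S') (subf vo f (Suc k) S' a)"
    using Suc.IH[OF _ S'sub] Suc.prems k1 by simp
  have eq: "subf vo f (Suc k) S' a = subf vo f k S a"
    using mrg_step[OF assms(1) kL cp(1), of a] cp(2) unfolding S'_def subf_def
    by (metis (no_types, lifting))
  have var: "obdd_var (mkB vo f) (nd vo f k S) = Some (vo ! k)"
    using decode_nd(1)[OF S] kL by (simp add: mkB_simps)
  have nxt: "(if a (vo ! k) then obdd_hi (mkB vo f) (nd vo f k S) else obdd_lo (mkB vo f) (nd vo f k S))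
      = nd vo f (Suc k) S'"
    using decode_nd[OF S] unfolding S'_def by (simp add: mkB_simps)
  have "obdd_reach (mkB vo f) a (nd vo f k S) (subf vo f (Suc k) S' a)"
    by (rule obdd_reach.inner[OF var]) (simp only: nxt IH)
  then show ?case using eq k_def by simp
qed

definition Sub where "Sub vo f k = subf vo f k ` Pow (set (take k vo))"

lemma nodes_var:
  assumes "k \<le> length vo" "S \<subseteq> set (take k vo)"
  shows "obdd_var (mkB vo f) (nd vo f k S) = (if k < length vo then Some (vo ! k) else None)"
  using decode_nd(1)[OF assms(2)] by (simp add: mkB_simps)

lemma is_obdd:
  assumes "distinct vo" "dep vo f"
  shows "is_pi_obdd vo (mkB vo f)"
proof -
  let ?B = "mkB vo f"
  let ?L = "length vo"
  have nodes: "obdd_nodes ?B = (\<Union>k\<in>{..?L}. nd vo f k ` Pow (set (take k vo)))"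
    by (simp add: mkB_simps)
  have fin: "finite (obdd_nodes ?B)" unfolding nodes by auto
  have root: "obdd_root ?B \<in> obdd_nodes ?B" unfolding nodes by (auto simp: mkB_simps)
  have sinks: "\<forall>u\<in>obdd_nodes ?B. \<forall>w\<in>obdd_nodes ?B.
        obdd_var ?B u = None \<and> obdd_var ?B w = None \<and> obdd_sink ?B u = obdd_sink ?B w \<longrightarrow> u = w"
  proof (intro ballI impI)
    fix u w assume u: "u \<in> obdd_nodes ?B" and w: "w \<in> obdd_nodes ?B"
      and h: "obdd_var ?B u = None \<and> obdd_var ?B w = None \<and> obdd_sink ?B u = obdd_sink ?B w"
    from u obtain k S where k: "k \<le> ?L" "S \<subseteq> set (take k vo)" "u = nd vo f k S" unfolding nodes by auto
    from w obtain k' T where k': "k' \<le> ?L" "T \<subseteq> set (take k' vo)" "w = nd vo f k' T" unfolding nodes by auto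
    have "k = ?L" using h k nodes_var[OF k(1,2)] by (auto split: if_splits)
    moreover have "k' = ?L" using h k' nodes_var[OF k'(1,2)] by (auto split: if_splits)
    ultimately have kk: "k = ?L" "k' = ?L" by auto
    have su: "obdd_sink ?B u = subf vo f ?L S a" for a
      using k kk decode_nd(2)[of S ?L vo f] canon_prop[of S ?L vo f] subf_const[OF assms(2)]
      by (simp add: mkB_simps) (metis)
    have sw: "obdd_sink ?B w = subf vo f ?L T a" for a
      using k' kk decode_nd(2)[of T ?L vo f] canon_prop[of T ?L vo f] subf_const[OF assms(2)]
      by (simp add: mkB_simps) (metis)
    have "subf vo f ?L S = subf vo f ?L T" using su sw h by auto
    then show "u = w" using k k' kk by (simp add: nd_def)
  qed
  have inner: "\<forall>u\<in>obdd_nodes ?B. \<forall>v. obdd_var ?B u = Some v \<longrightarrow>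
        v \<in> set vo \<and> obdd_lo ?B u \<in> obdd_nodes ?B \<and> obdd_hi ?B u \<in> obdd_nodes ?B \<and>
        (\<forall>w\<in>{obdd_lo ?B u, obdd_hi ?B u}. \<forall>v'. obdd_var ?B w = Some v' \<longrightarrow>
            (\<exists>i j. i < j \<and> j < length vo \<and> vo ! i = v \<and> vo ! j = v'))"
  proof (intro ballI allI impI)
    fix u v assume u: "u \<in> obdd_nodes ?B" and h: "obdd_var ?B u = Some v"
    from u obtain k S where k: "k \<le> ?L" "S \<subseteq> set (take k vo)" "u = nd vo f k S" unfolding nodes by auto
    have kL: "k < ?L" and v: "v = vo ! k" using h nodes_var[OF k(1,2)] k by (auto split: if_splits)
    let ?c = "canon vo f k (subf vo f k S)"
    have cp: "?c \<subseteq> set (take k vo)" using canon_prop[OF k(2)] by auto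
    have lo: "obdd_lo ?B u = nd vo f (Suc k) ?c" using decode_nd[OF k(2)] k by (simp add: mkB_simps)
    have hi: "obdd_hi ?B u = nd vo f (Suc k) (insert (vo ! k) ?c)" using decode_nd[OF k(2)] k by (simp add: mkB_simps)
    have s1: "?c \<subseteq> set (take (Suc k) vo)" and s2: "insert (vo ! k) ?c \<subseteq> set (take (Suc k) vo)"
      using cp set_take_Suc[OF kL] by auto
    have "obdd_lo ?B u \<in> obdd_nodes ?B" unfolding nodes lo using kL s1 by (intro UN_I[of "Suc k"]) auto
    moreover have "obdd_hi ?B u \<in> obdd_nodes ?B" unfolding nodes hi using kL s2 by (intro UN_I[of "Suc k"]) auto
    moreover have "v \<in> set vo" using v kL by simp
    moreover have "\<forall>w\<in>{obdd_lo ?B u, obdd_hi ?B u}. \<forall>v'. obdd_var ?B w = Some v' \<longrightarrow>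
            (\<exists>i j. i < j \<and> j < length vo \<and> vo ! i = v \<and> vo ! j = v')"
    proof (intro ballI allI impI)
      fix w v' assume w: "w \<in> {obdd_lo ?B u, obdd_hi ?B u}" and hw: "obdd_var ?B w = Some v'"
      have "Suc k < ?L \<and> v' = vo ! Suc k"
      proof (cases "w = obdd_lo ?B u")
        case True then show ?thesis using hw nodes_var[OF _ s1] kL lo by (auto split: if_splits)
      next
        case False then have "w = obdd_hi ?B u" using w by auto
        then show ?thesis using hw nodes_var[OF _ s2] kL hi by (auto split: if_splits)
      qed
      then show "\<exists>i j. i < j \<and> j < length vo \<and> vo ! i = v \<and> vo ! j = v'" using v by blast
    qed
    ultimately show "v \<in> set vo \<and> obdd_lo ?B u \<in> obdd_nodes ?B \<and> obdd_hi ?B u \<in> obdd_nodes ?B \<and>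
        (\<forall>w\<in>{obdd_lo ?B u, obdd_hi ?B u}. \<forall>v'. obdd_var ?B w = Some v' \<longrightarrow>
            (\<exists>i j. i < j \<and> j < length vo \<and> vo ! i = v \<and> vo ! j = v'))" by blast
  qed
  show ?thesis unfolding is_pi_obdd_def using assms(1) fin root sinks inner by blast
qed

lemma represents:
  assumes "distinct vo" "dep vo f"
  shows "obdd_represents (mkB vo f) f"
  unfolding obdd_represents_def
proof
  fix a
  have "obdd_reach (mkB vo f) a (nd vo f (length vo - length vo) {}) (subf vo f (length vo - length vo) {} a)"
    by (rule reach[OF assms]) auto
  moreover have "subf vo f 0 {} a = f a" by (simp add: subf_def mrg_def)
  ultimately show "obdd_reach (mkB vo f) a (obdd_root (mkB vo f)) (f a)" by (simp add: mkB_simps)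
qed

lemma size_le:
  "obdd_size (mkB vo f) \<le> (\<Sum>k\<in>{..length vo}. card (Sub vo f k))"
proof -
  have "obdd_size (mkB vo f) \<le> (\<Sum>k\<in>{..length vo}. card (nd vo f k ` Pow (set (take k vo))))"
    unfolding obdd_size_def by (simp add: mkB_simps card_UN_le)
  also have "\<dots> \<le> (\<Sum>k\<in>{..length vo}. card (Sub vo f k))"
  proof (rule sum_mono)
    fix k
    have "nd vo f k ` Pow (set (take k vo)) = ndg vo f k ` Sub vo f k"
      unfolding Sub_def nd_def by auto
    then show "card (nd vo f k ` Pow (set (take k vo))) \<le> card (Sub vo f k)"
      by (simp add: card_image_le Sub_def)
  qed
  finally show ?thesis .
qed

lemma min_le:
  assumes "distinct vo" "dep vo f"
  shows "min_obdd_size vo f \<le> (\<Sum>k\<in>{..length vo}. card (Sub vo f k))"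
proof -
  have "min_obdd_size vo f \<le> obdd_size (mkB vo f)"
    unfolding min_obdd_size_def
    by (rule Least_le) (use is_obdd[OF assms] represents[OF assms] in blast)
  then show ?thesis using size_le by (rule order_trans)
qed

lemma finite_Sub: "finite (Sub vo f k)" unfolding Sub_def by simp

lemma Sub_Suc:
  assumes "distinct vo" "k < length vo"
  shows "card (Sub vo f (Suc k)) \<le> 2 * card (Sub vo f k)"
proof -
  let ?g = "\<lambda>(g::(nat\<Rightarrow>bool)\<Rightarrow>bool, b). \<lambda>a. g (a(vo ! k := b))"
  have "Sub vo f (Suc k) \<subseteq> ?g ` (Sub vo f k \<times> UNIV)"
  proof
    fix h assume "h \<in> Sub vo f (Suc k)"
    then obtain S' where S': "S' \<subseteq> set (take (Suc k) vo)" "h = subf vo f (Suc k) S'" by (auto simp: Sub_def)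
    have sub: "S' - {vo ! k} \<subseteq> set (take k vo)" using S'(1) set_take_Suc[OF assms(2)] by auto
    have "mrg vo (Suc k) S' a = mrg vo k (S' - {vo ! k}) (a(vo ! k := vo ! k \<in> S'))" for a
    proof
      fix v
      show "mrg vo (Suc k) S' a v = mrg vo k (S' - {vo ! k}) (a(vo ! k := vo ! k \<in> S')) v"
        unfolding mrg_def set_take_Suc[OF assms(2)] using notin_take[OF assms] by auto
    qed
    then have "h = ?g (subf vo f k (S' - {vo ! k}), vo ! k \<in> S')"
      using S'(2) by (simp add: subf_def)
    then show "h \<in> ?g ` (Sub vo f k \<times> UNIV)" using sub by (auto simp: Sub_def)
  qed
  then have "card (Sub vo f (Suc k)) \<le> card (?g ` (Sub vo f k \<times> (UNIV::bool set)))"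
    by (intro card_mono finite_imageI) (auto simp: finite_Sub)
  also have "\<dots> \<le> card (Sub vo f k \<times> (UNIV::bool set))" by (rule card_image_le) (auto simp: finite_Sub)
  also have "\<dots> = 2 * card (Sub vo f k)" by (simp add: card_cartesian_product)
  finally show ?thesis .
qed



lemma chain_card:
  assumes "finite \<T>" "\<forall>T\<in>\<T>. T \<subseteq> {..<B}" "\<forall>T\<in>\<T>. \<forall>T'\<in>\<T>. T \<subseteq> T' \<or> T' \<subseteq> T"
  shows "card \<T> \<le> Suc B"
proof -
  have "inj_on card \<T>"
  proof (rule inj_onI)
    fix T T' assume h: "T \<in> \<T>" "T' \<in> \<T>" "card T = card T'"
    have fT: "finite T" "finite T'" using h assms(2) finite_subset by blast+
    show "T = T'"
    proof (cases "T \<subseteq> T'")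
      case True then show ?thesis using card_subset_eq[OF fT(2) True] h(3) by simp
    next
      case False then have "T' \<subseteq> T" using assms(3) h by blast
      have "T' = T" using card_subset_eq[OF fT(1) \<open>T' \<subseteq> T\<close>] h(3) by simp
      then show ?thesis by simp
    qed
  qed
  moreover have "card ` \<T> \<subseteq> {..B}"
    using assms(2) by (auto intro: card_mono[of "{..<B}", simplified] order_trans)
  ultimately have "card \<T> \<le> card {..B}" by (intro card_inj_on_le) auto
  then show ?thesis by simp
qed

definition hh :: "(nat \<Rightarrow> nat \<Rightarrow> bool) \<Rightarrow> nat \<Rightarrow> nat \<Rightarrow> nat \<Rightarrow> nat \<Rightarrow> nat \<Rightarrow> bool" where
  "hh F B p q = (\<lambda>u v. u < B \<and> v < B \<and> F (p*B+u) (q*B+v))"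

locale antisym_fun =
  fixes F :: "nat \<Rightarrow> nat \<Rightarrow> bool" and B :: nat
  assumes sym: "\<And>x y. F x y = F y x"
    and anti: "\<And>x y y'. x < y \<Longrightarrow> y \<le> y' \<Longrightarrow> F x y' \<Longrightarrow> F x y"
    and Bpos: "B > 0"
begin

abbreviation h where "h \<equiv> hh F B"
lemmas h_def = hh_def[of F B]

lemma fixed_p: "card (h p ` {q. p < q \<and> q < M}) \<le> 2*B+1"
proof -
  let ?Q = "{q. p < q \<and> q < M}"
  define P where "P q u \<longleftrightarrow> u < B \<and> F (p*B+u) (q*B) \<and> \<not> F (p*B+u) (q*B+B-1)" for q u
  define Q1 where "Q1 = {q\<in>?Q. \<exists>u. P q u}"
  define Q2 where "Q2 = ?Q - Q1"
  have lt: "p*B+u < q*B" if "p < q" "u < B" for q u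
  proof -
    have "Suc p * B \<le> q * B" using that by (intro mult_le_mono1) simp
    then show ?thesis using that by simp
  qed
  have fin: "finite ?Q" by simp
  define wit where "wit q = (SOME u. P q u)" for q
  have witP: "P q (wit q)" if "q \<in> Q1" for q using that unfolding Q1_def wit_def by (auto intro: someI)
  have "inj_on wit Q1"
  proof (rule inj_onI)
    fix q q' assume h1: "q \<in> Q1" "q' \<in> Q1" "wit q = wit q'"
    show "q = q'"
    proof (rule ccontr)
      assume "q \<noteq> q'"
      then consider "q < q'" | "q' < q" by linarith
      then show False
      proof cases
        case 1
        let ?u = "wit q"
        have a: "?u < B" "F (p*B+?u) (q'*B)" "\<not> F (p*B+?u) (q*B+B-1)"
          using witP[OF h1(1)] witP[OF h1(2)] h1(3) unfolding P_def by auto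
        have "p < q" using h1 unfolding Q1_def by auto
        have "p*B + ?u < q*B+B-1" using lt[OF \<open>p<q\<close> a(1)] Bpos by simp
        moreover have "q*B+B-1 \<le> q'*B"
        proof -
          have "Suc q * B \<le> q' * B" using 1 by (intro mult_le_mono1) simp
          then show ?thesis by simp
        qed
        ultimately show False using anti a by blast
      next
        case 2
        let ?u = "wit q'"
        have a: "?u < B" "F (p*B+?u) (q*B)" "\<not> F (p*B+?u) (q'*B+B-1)"
          using witP[OF h1(1)] witP[OF h1(2)] h1(3) unfolding P_def by auto
        have "p < q'" using h1 unfolding Q1_def by auto
        have "p*B + ?u < q'*B+B-1" using lt[OF \<open>p<q'\<close> a(1)] Bpos by simp
        moreover have "q'*B+B-1 \<le> q*B"
        proof -
          have "Suc q' * B \<le> q * B" using 2 by (intro mult_le_mono1) simp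
          then show ?thesis by simp
        qed
        ultimately show False using anti a by blast
      qed
    qed
  qed
  moreover have "wit ` Q1 \<subseteq> {..<B}" using witP unfolding P_def by auto
  ultimately have c1: "card Q1 \<le> B" using card_inj_on_le[of wit Q1 "{..<B}"] by simp
  define Ts where "Ts q = {u. u < B \<and> F (p*B+u) (q*B)}" for q
  have hQ2: "h p q = (\<lambda>u v. u < B \<and> v < B \<and> u \<in> Ts q)" if "q \<in> Q2" for q
  proof -
    have pq: "p < q" and nP: "\<And>u. \<not> P q u" using that unfolding Q2_def Q1_def by auto
    have "F (p*B+u) (q*B+v) = F (p*B+u) (q*B)" if "u < B" "v < B" for u v
    proof
      assume "F (p*B+u) (q*B+v)"
      then show "F (p*B+u) (q*B)" using anti lt[OF pq that(1)] by (meson le_add1)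
    next
      assume f: "F (p*B+u) (q*B)"
      then have "F (p*B+u) (q*B+B-1)" using nP[of u] that unfolding P_def by blast
      moreover have "p*B+u < q*B+v" using lt[OF pq that(1)] by simp
      moreover have "q*B+v \<le> q*B+B-1" using that by simp
      ultimately show "F (p*B+u) (q*B+v)" using anti by blast
    qed
    then show ?thesis unfolding h_def Ts_def by (auto simp: fun_eq_iff)
  qed
  have "h p ` Q2 \<subseteq> (\<lambda>T u v. u < B \<and> v < B \<and> u \<in> T) ` (Ts ` Q2)" using hQ2 by auto
  then have "card (h p ` Q2) \<le> card (Ts ` Q2)"
  proof -
    have f2: "finite Q2" unfolding Q2_def by simp
    have "card (h p ` Q2) \<le> card ((\<lambda>T u v. u < B \<and> v < B \<and> u \<in> T) ` (Ts ` Q2))"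
      by (rule card_mono) (use f2 \<open>h p ` Q2 \<subseteq> _\<close> in auto)
    also have "\<dots> \<le> card (Ts ` Q2)" by (rule card_image_le) (use f2 in simp)
    finally show ?thesis .
  qed
  also have "\<dots> \<le> Suc B"
  proof (rule chain_card)
    show "finite (Ts ` Q2)" unfolding Q2_def by simp
    show "\<forall>T\<in>Ts ` Q2. T \<subseteq> {..<B}" unfolding Ts_def by auto
    have monoT: "Ts q' \<subseteq> Ts q" if "q \<in> Q2" "q' \<in> Q2" "q \<le> q'" for q q'
    proof
      fix u assume "u \<in> Ts q'"
      then have "u < B" "F (p*B+u) (q'*B)" unfolding Ts_def by auto
      moreover have "p < q" using that unfolding Q2_def by auto
      moreover have "q*B \<le> q'*B" using that by simp
      ultimately show "u \<in> Ts q" unfolding Ts_def using anti lt by blast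
    qed
    then show "\<forall>T\<in>Ts ` Q2. \<forall>T'\<in>Ts ` Q2. T \<subseteq> T' \<or> T' \<subseteq> T"
    proof (intro ballI)
      fix T T' assume "T \<in> Ts ` Q2" "T' \<in> Ts ` Q2"
      then obtain q q' where "q \<in> Q2" "q' \<in> Q2" "T = Ts q" "T' = Ts q'" by blast
      then show "T \<subseteq> T' \<or> T' \<subseteq> T" using monoT[of q q'] monoT[of q' q]
        by (cases "q \<le> q'") auto
    qed
  qed
  finally have c2: "card (h p ` Q2) \<le> Suc B" .
  have "h p ` ?Q = h p ` Q1 \<union> h p ` Q2" unfolding Q2_def Q1_def by auto
  then have "card (h p ` ?Q) \<le> card (h p ` Q1) + card (h p ` Q2)" using card_Un_le by simp
  also have "\<dots> \<le> card Q1 + Suc B"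
  proof -
    have "finite Q1" unfolding Q1_def by simp
    then show ?thesis using c2 card_image_le[of Q1 "h p"] by simp
  qed
  finally show ?thesis using c1 by simp
qed

lemma h_sym: "h q p = (\<lambda>u v. h p q v u)"
  unfolding h_def using sym by (auto simp: fun_eq_iff)

lemma all_pq: "card {h p q | p q. p < M \<and> q < M} \<le> M + 2 * (M * (2*B+1))"
proof -
  let ?U = "\<Union>p\<in>{..<M}. h p ` {q. p < q \<and> q < M}"
  let ?tr = "\<lambda>g::nat\<Rightarrow>nat\<Rightarrow>bool. \<lambda>u v. g v u"
  have sub: "{h p q | p q. p < M \<and> q < M} \<subseteq> (\<lambda>p. h p p) ` {..<M} \<union> ?U \<union> ?tr ` ?U"
  proof
    fix g assume "g \<in> {h p q | p q. p < M \<and> q < M}"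
    then obtain p q where g: "g = h p q" "p < M" "q < M" by auto
    consider "p = q" | "p < q" | "q < p" by linarith
    then show "g \<in> (\<lambda>p. h p p) ` {..<M} \<union> ?U \<union> ?tr ` ?U"
    proof cases
      case 3
      have "h q p \<in> ?U" using g 3 by auto
      moreover have "g = ?tr (h q p)" using g h_sym[of p q] by simp
      ultimately show ?thesis by blast
    qed (use g in auto)
  qed
  have cU: "card ?U \<le> M * (2*B+1)"
  proof -
    have "card ?U \<le> (\<Sum>p\<in>{..<M}. card (h p ` {q. p < q \<and> q < M}))" by (rule card_UN_le) simp
    also have "\<dots> \<le> (\<Sum>p\<in>{..<M}. 2*B+1)" by (rule sum_mono) (rule fixed_p)
    finally show ?thesis by simp
  qed
  have fU: "finite ?U" by simp
  have "card {h p q | p q. p < M \<and> q < M} \<le> card ((\<lambda>p. h p p) ` {..<M} \<union> ?U \<union> ?tr ` ?U)"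
    by (rule card_mono[OF _ sub]) (use fU in simp)
  also have "\<dots> \<le> card ((\<lambda>p. h p p) ` {..<M}) + card ?U + card (?tr ` ?U)"
    using card_Un_le[of "(\<lambda>p. h p p) ` {..<M} \<union> ?U" "?tr ` ?U"] card_Un_le[of "(\<lambda>p. h p p) ` {..<M}" ?U] by linarith
  also have "\<dots> \<le> M + card ?U + card ?U"
    using card_image_le[of "{..<M}" "\<lambda>p. h p p"] card_image_le[OF fU, of ?tr] by simp
  finally show ?thesis using cU by simp
qed

end



definition FF :: "nat \<Rightarrow> (nat \<Rightarrow> real) \<Rightarrow> (nat \<Rightarrow> real) \<Rightarrow> nat \<Rightarrow> nat \<Rightarrow> bool" where
  "FF N l r x y \<longleftrightarrow> x < N \<and> y < N \<and> interval_adj l r x y"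

lemma FF_sym: "FF N l r x y = FF N l r y x"
  unfolding FF_def interval_adj_def by (auto simp: Int_commute)

lemma FF_anti:
  assumes rep: "interval_rep N l r" and h: "x < y" "y \<le> y'" "FF N l r x y'"
  shows "FF N l r x y"
proof (cases "y = y'")
  case True then show ?thesis using h by simp
next
  case False
  then have yy: "y < y'" using h by simp
  have N: "x < N" "y < N" "y' < N" using h yy unfolding FF_def by auto
  have t: "l y' \<le> r x" using h(3) unfolding FF_def interval_adj_def by auto
  have r1: "l y < l y'" "l x < l y" "l y < r y" using rep N yy h(1) unfolding interval_rep_def by auto
  have "l y \<in> {l x..r x} \<inter> {l y..r y}" using t r1 by auto
  then show ?thesis using N h(1) unfolding FF_def interval_adj_def by auto
qed

lemma FF_antisym_fun:
  assumes "interval_rep N l r" "B > 0"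
  shows "antisym_fun (FF N l r) B"
  using assms FF_sym FF_anti by unfold_locales blast+

lemma io_take: "take (2*j) (concat (map (\<lambda>k. [k, (n::nat)+k]) xs)) = concat (map (\<lambda>k. [k, n+k]) (take j xs))"
proof (induction xs arbitrary: j)
  case (Cons x xs)
  then show ?case
  proof (cases j)
    case (Suc j')
    have "2 * j = Suc (Suc (2 * j'))" using Suc by simp
    then show ?thesis using Cons[of j'] Suc by simp
  qed simp
qed simp

lemma io_length: "length (concat (map (\<lambda>k. [k, (n::nat)+k]) xs)) = 2 * length xs"
  by (induction xs) auto

lemma io_distinct: "distinct xs \<Longrightarrow> \<forall>k\<in>set xs. k < n \<Longrightarrow> distinct (concat (map (\<lambda>k. [k, (n::nat)+k]) xs))"
  by (induction xs) force+

lemma io_len: "length (interleaved_order n) = 2*n"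
  unfolding interleaved_order_def by (simp add: io_length)

lemma io_dist: "distinct (interleaved_order n)"
  unfolding interleaved_order_def by (rule io_distinct) auto

lemma io_set: "set (interleaved_order n) = {..<2*n}"
proof -
  have "set (interleaved_order n) = (\<Union>k\<in>{..<n}. {k, n+k})"
    unfolding interleaved_order_def by auto
  also have "\<dots> = {..<2*n}"
  proof (rule set_eqI, rule iffI)
    fix x assume "x \<in> {..<2*n}"
    then show "x \<in> (\<Union>k\<in>{..<n}. {k, n+k})"
      by (cases "x < n") (auto intro!: bexI[of _ "x - n"])
  qed auto
  finally show ?thesis .
qed

lemma io_take_set:
  assumes "j \<le> n"
  shows "set (take (2*j) (interleaved_order n)) = {i. n - j \<le> i \<and> i < n} \<union> {i. n + (n - j) \<le> i \<and> i < n + n}"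
proof -
  have "take j (rev [0..<n]) = rev [n-j..<n]" by (simp add: take_rev)
  then have "set (take (2*j) (interleaved_order n)) = (\<Union>k\<in>{n-j..<n}. {k, n+k})"
    unfolding interleaved_order_def io_take by auto
  also have "\<dots> = {i. n - j \<le> i \<and> i < n} \<union> {i. n + (n - j) \<le> i \<and> i < n + n}"
  proof (rule set_eqI, rule iffI)
    fix x assume "x \<in> {i. n - j \<le> i \<and> i < n} \<union> {i. n + (n - j) \<le> i \<and> i < n + n}"
    then show "x \<in> (\<Union>k\<in>{n-j..<n}. {k, n+k})"
      by (cases "x < n") (auto intro!: bexI[of _ "x - n"])
  qed auto
  finally show ?thesis .
qed

lemma bin_val_lt: "bin_val k a < 2 ^ k"
  by (induction k) (auto simp: bin_val_def)

lemma bin_val_cong: "(\<And>i. i < k \<Longrightarrow> a i = b i) \<Longrightarrow> bin_val k a = bin_val k b"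
  unfolding bin_val_def by (rule sum.cong) auto

lemma sum_split_nat: "(m::nat) \<le> n \<Longrightarrow> sum g {..<n} = sum g {..<m} + (sum g {m..<n} :: nat)"
proof -
  assume "m \<le> n"
  then have "{..<n} = {..<m} \<union> {m..<n}" by auto
  moreover have "{..<m} \<inter> {m..<n} = {}" by auto
  ultimately show ?thesis by (simp add: sum.union_disjoint)
qed

lemma chi_dep: "dep (interleaved_order (nbits N)) (chi_E N l r)"
  unfolding dep_def io_set
proof (intro allI impI)
  fix a b :: "nat \<Rightarrow> bool"
  let ?n = "nbits N"
  assume h: "\<forall>v\<in>{..<2 * ?n}. a v = b v"
  have "bin_val ?n a = bin_val ?n b" by (rule bin_val_cong) (use h in auto)
  moreover have "bin_val ?n (\<lambda>i. a (?n+i)) = bin_val ?n (\<lambda>i. b (?n+i))" by (rule bin_val_cong) (use h in auto)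
  ultimately show "chi_E N l r a = chi_E N l r b" unfolding chi_E_def Let_def by simp
qed

lemma chi_FF: "chi_E N l r a = FF N l r (bin_val (nbits N) a) (bin_val (nbits N) (\<lambda>i. a (nbits N + i)))"
  unfolding chi_E_def FF_def Let_def by simp

lemma sub_even:
  assumes "j \<le> nbits N" "S \<subseteq> set (take (2*j) (interleaved_order (nbits N)))"
  shows "\<exists>p q. p < 2^j \<and> q < 2^j \<and>
     subf (interleaved_order (nbits N)) (chi_E N l r) (2*j) S =
       (\<lambda>a. hh (FF N l r) (2^(nbits N - j)) p q (bin_val (nbits N - j) a) (bin_val (nbits N - j) (\<lambda>i. a (nbits N + i))))"
proof -
  define n where "n = nbits N"
  define m where "m = n - j"
  define B :: nat where "B = 2^m"
  define vo where "vo = interleaved_order n"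
  have jn: "j \<le> n" using assms n_def by simp
  have fix_: "set (take (2*j) vo) = {i. m \<le> i \<and> i < n} \<union> {i. n + m \<le> i \<and> i < n + n}"
    unfolding vo_def m_def using io_take_set[OF jn] by simp
  define PS where "PS = (\<Sum>i\<in>{m..<n}. if i \<in> S then 2^i else 0::nat)"
  define QS where "QS = (\<Sum>i\<in>{m..<n}. if n + i \<in> S then 2^i else 0::nat)"
  have xv: "bin_val n (mrg vo (2*j) S a) = bin_val m a + PS" for a
  proof -
    have "bin_val n (mrg vo (2*j) S a) = (\<Sum>i\<in>{..<m}. if mrg vo (2*j) S a i then 2^i else 0) + (\<Sum>i\<in>{m..<n}. if mrg vo (2*j) S a i then 2^i else 0)"
      unfolding bin_val_def by (rule sum_split_nat) (simp add: m_def)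
    also have "(\<Sum>i\<in>{..<m}. if mrg vo (2*j) S a i then 2^i else 0) = bin_val m a"
      unfolding bin_val_def by (rule sum.cong) (auto simp: mrg_def fix_)
    also have "(\<Sum>i\<in>{m..<n}. if mrg vo (2*j) S a i then 2^i else (0::nat)) = PS"
      unfolding PS_def by (rule sum.cong) (auto simp: mrg_def fix_)
    finally show ?thesis .
  qed
  have yv: "bin_val n (\<lambda>i. mrg vo (2*j) S a (n + i)) = bin_val m (\<lambda>i. a (n + i)) + QS" for a
  proof -
    have "bin_val n (\<lambda>i. mrg vo (2*j) S a (n+i)) = (\<Sum>i\<in>{..<m}. if mrg vo (2*j) S a (n+i) then 2^i else 0) + (\<Sum>i\<in>{m..<n}. if mrg vo (2*j) S a (n+i) then 2^i else 0)"
      unfolding bin_val_def by (rule sum_split_nat) (simp add: m_def)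
    also have "(\<Sum>i\<in>{..<m}. if mrg vo (2*j) S a (n+i) then 2^i else 0) = bin_val m (\<lambda>i. a (n + i))"
      unfolding bin_val_def by (rule sum.cong) (auto simp: mrg_def fix_)
    also have "(\<Sum>i\<in>{m..<n}. if mrg vo (2*j) S a (n+i) then 2^i else (0::nat)) = QS"
      unfolding QS_def by (rule sum.cong) (auto simp: mrg_def fix_)
    finally show ?thesis .
  qed
  have mult: "(\<Sum>i\<in>{m..<n}. if P i then 2^i else 0::nat) = (\<Sum>i\<in>{m..<n}. if P i then 2^(i-m) else 0) * B" for P
    unfolding sum_distrib_right B_def
    by (rule sum.cong) (auto simp flip: power_add)
  have small: "(\<Sum>i\<in>{m..<n}. if P i then 2^i else 0::nat) < 2^n" for P
  proof -
    have "(\<Sum>i\<in>{m..<n}. if P i then 2^i else 0::nat) \<le> bin_val n P"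
      unfolding bin_val_def by (rule sum_mono2) auto
    then show ?thesis using bin_val_lt[of n P] by simp
  qed
  have MB: "2^j * B = 2^n" unfolding B_def m_def using jn by (simp flip: power_add)
  obtain p where p: "PS = p * B" "p < 2^j"
  proof
    show "PS = (\<Sum>i\<in>{m..<n}. if i \<in> S then 2^(i-m) else 0) * B" unfolding PS_def by (rule mult)
    have "(\<Sum>i\<in>{m..<n}. if i \<in> S then 2^(i-m) else 0::nat) * B < 2^j * B"
      using small[of "\<lambda>i. i \<in> S"] mult[of "\<lambda>i. i \<in> S"] MB unfolding PS_def by simp
    then show "(\<Sum>i\<in>{m..<n}. if i \<in> S then 2^(i-m) else 0::nat) < 2^j" by simp
  qed
  obtain q where q: "QS = q * B" "q < 2^j"
  proof
    show "QS = (\<Sum>i\<in>{m..<n}. if n + i \<in> S then 2^(i-m) else 0) * B" unfolding QS_def by (rule mult)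
    have "(\<Sum>i\<in>{m..<n}. if n + i \<in> S then 2^(i-m) else 0::nat) * B < 2^j * B"
      using small[of "\<lambda>i. n + i \<in> S"] mult[of "\<lambda>i. n + i \<in> S"] MB unfolding QS_def by simp
    then show "(\<Sum>i\<in>{m..<n}. if n + i \<in> S then 2^(i-m) else 0::nat) < 2^j" by simp
  qed
  have "subf vo (chi_E N l r) (2*j) S = (\<lambda>a. hh (FF N l r) B p q (bin_val m a) (bin_val m (\<lambda>i. a (n + i))))"
  proof
    fix a
    show "subf vo (chi_E N l r) (2*j) S a = hh (FF N l r) B p q (bin_val m a) (bin_val m (\<lambda>i. a (n + i)))"
      unfolding subf_def chi_FF hh_def
      using xv[of a] yv[of a] p q bin_val_lt[of m a] bin_val_lt[of m "\<lambda>i. a (n+i)"]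
      by (simp add: n_def[symmetric] B_def add.commute hh_def)
  qed
  then show ?thesis using p q unfolding vo_def n_def m_def B_def by blast
qed


lemma even_bound:
  assumes rep: "interval_rep N l r" and jn: "j \<le> nbits N"
  shows "card (Sub (interleaved_order (nbits N)) (chi_E N l r) (2*j)) \<le> 7 * 2^(nbits N)"
proof -
  define n where "n = nbits N"
  define m where "m = n - j"
  define B :: nat where "B = 2^m"
  define M :: nat where "M = 2^j"
  define Psi where "Psi g = (\<lambda>a. g (bin_val m a) (bin_val m (\<lambda>i. a (n + i))))" for g :: "nat \<Rightarrow> nat \<Rightarrow> bool"
  let ?H = "{hh (FF N l r) B p q | p q. p < M \<and> q < M}"
  have sub: "Sub (interleaved_order n) (chi_E N l r) (2*j) \<subseteq> Psi ` ?H"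
  proof
    fix g assume "g \<in> Sub (interleaved_order n) (chi_E N l r) (2*j)"
    then obtain S where S: "S \<subseteq> set (take (2*j) (interleaved_order n))" "g = subf (interleaved_order n) (chi_E N l r) (2*j) S"
      unfolding Sub_def by auto
    have S1: "S \<subseteq> set (take (2*j) (interleaved_order (nbits N)))" using S(1) unfolding n_def .
    note ex = sub_even[OF jn S1, of l r]
    obtain p q where pq: "p < 2^j \<and> q < 2^j \<and> subf (interleaved_order (nbits N)) (chi_E N l r) (2*j) S =
       (\<lambda>a. hh (FF N l r) (2^(nbits N - j)) p q (bin_val (nbits N - j) a) (bin_val (nbits N - j) (\<lambda>i. a (nbits N + i))))"
      using ex by (elim exE) (erule that)
    have g: "g = subf (interleaved_order (nbits N)) (chi_E N l r) (2*j) S" using S(2) unfolding n_def .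
    have gH: "g = Psi (hh (FF N l r) B p q)" unfolding g using pq unfolding Psi_def B_def m_def n_def by (elim conjE) assumption
    have pM: "p < M" "q < M" using pq unfolding M_def by simp_all
    have "hh (FF N l r) B p q \<in> ?H" using pM by blast
    then show "g \<in> Psi ` ?H" unfolding gH by (rule imageI)
  qed
  have finH: "finite ?H"
  proof (rule finite_subset)
    show "?H \<subseteq> (\<lambda>(p,q). hh (FF N l r) B p q) ` ({..<M} \<times> {..<M})"
    proof
      fix x assume "x \<in> ?H"
      then obtain p q where "x = hh (FF N l r) B p q" "p < M" "q < M" by blast
      then show "x \<in> (\<lambda>(p,q). hh (FF N l r) B p q) ` ({..<M} \<times> {..<M})" by force
    qed
  qed simp
  have "card (Sub (interleaved_order n) (chi_E N l r) (2*j)) \<le> card (Psi ` ?H)"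
    by (rule card_mono[OF _ sub]) (use finH in simp)
  also have "\<dots> \<le> card ?H" by (rule card_image_le[OF finH])
  also have "\<dots> \<le> M + 2 * (M * (2*B+1))"
    by (rule antisym_fun.all_pq[OF FF_antisym_fun[OF rep]]) (simp add: B_def)
  also have "\<dots> \<le> 7 * 2^n"
  proof -
    have MB: "M * B = 2^n" unfolding M_def B_def m_def n_def using jn by (simp flip: power_add)
    have "M \<le> 2^n" unfolding M_def n_def using jn by (simp add: power_increasing)
    then show ?thesis using MB by (simp add: algebra_simps)
  qed
  finally show ?thesis unfolding n_def .
qed

lemma level_bound:
  assumes rep: "interval_rep N l r" and k: "k \<le> 2 * nbits N"
  shows "card (Sub (interleaved_order (nbits N)) (chi_E N l r) k) \<le> 14 * 2^(nbits N)"
proof (cases "even k")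
  case True
  define j where "j = k div 2"
  have j: "k = 2*j" using True unfolding j_def by simp
  then have jn: "j \<le> nbits N" using k by simp
  have "card (Sub (interleaved_order (nbits N)) (chi_E N l r) (2*j)) \<le> 7 * 2^(nbits N)"
    by (rule even_bound[OF rep jn])
  then show ?thesis unfolding j by simp
next
  case False
  define j where "j = k div 2"
  have j: "k = Suc (2*j)" using False unfolding j_def by presburger
  then have jn: "j \<le> nbits N" and lt: "2*j < length (interleaved_order (nbits N))" using k by (simp_all add: io_len)
  have "card (Sub (interleaved_order (nbits N)) (chi_E N l r) k) \<le> 2 * card (Sub (interleaved_order (nbits N)) (chi_E N l r) (2*j))"
    unfolding j by (rule Sub_Suc[OF io_dist lt])
  also have "\<dots> \<le> 2 * (7 * 2^(nbits N))" using even_bound[OF rep jn] by simp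
  finally show ?thesis by simp
qed

lemma total_bound:
  assumes rep: "interval_rep N l r"
  shows "min_obdd_size (interleaved_order (nbits N)) (chi_E N l r) \<le> (2 * nbits N + 1) * (14 * 2^(nbits N))"
proof -
  have "min_obdd_size (interleaved_order (nbits N)) (chi_E N l r)
      \<le> (\<Sum>k\<in>{..length (interleaved_order (nbits N))}. card (Sub (interleaved_order (nbits N)) (chi_E N l r) k))"
    by (rule min_le[OF io_dist chi_dep])
  also have "\<dots> \<le> (\<Sum>k\<in>{..2 * nbits N}. 14 * 2^(nbits N))"
    unfolding io_len by (rule sum_mono) (use level_bound[OF rep] in simp)
  finally show ?thesis by simp
qed

lemma nbits_facts:
  assumes "N \<ge> 2"
  shows "1 \<le> log 2 (real N)" "real (nbits N) \<le> 2 * log 2 (real N)" "nbits N \<ge> 1"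
    "real (2 ^ nbits N) \<le> 2 * real N"
proof -
  let ?L = "log 2 (real N)"
  show L1: "1 \<le> ?L" using assms by simp
  have c0: "0 \<le> \<lceil>?L\<rceil>" using L1 by linarith
  have rn: "real (nbits N) = of_int \<lceil>?L\<rceil>" unfolding nbits_def using c0 by simp
  have lt: "real (nbits N) < ?L + 1" using rn by linarith
  show "real (nbits N) \<le> 2 * ?L" using lt L1 by linarith
  have "real (nbits N) \<ge> 1" using rn L1 by (simp add: le_ceiling_iff)
  then show "nbits N \<ge> 1" by simp
  have "real (2 ^ nbits N) = 2 powr real (nbits N)" by (simp add: powr_realpow)
  also have "\<dots> \<le> 2 powr (?L + 1)" using lt by (intro powr_mono) auto
  also have "\<dots> = 2 * real N" using assms by (simp add: powr_add)
  finally show "real (2 ^ nbits N) \<le> 2 * real N" .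
qed

theorem mainTheorem1:
  "\<exists>c::real. c > 0 \<and>
     (\<forall>N::nat. \<forall>l r. N \<ge> 2 \<longrightarrow> interval_rep N l r \<longrightarrow>
        real (min_obdd_size (interleaved_order (nbits N)) (chi_E N l r))
          \<le> c * real N * log 2 (real N))"
proof (intro exI[of _ 168] conjI allI impI)
  fix N :: nat and l r :: "nat \<Rightarrow> real"
  assume N: "N \<ge> 2" and rep: "interval_rep N l r"
  let ?n = "nbits N"
  let ?L = "log 2 (real N)"
  note nf = nbits_facts[OF N]
  have "real (min_obdd_size (interleaved_order ?n) (chi_E N l r)) \<le> real ((2 * ?n + 1) * (14 * 2^?n))"
    using total_bound[OF rep] by linarith
  also have "\<dots> = real (2 * ?n + 1) * (14 * real (2 ^ ?n))" by (simp only: of_nat_mult of_nat_numeral)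
  also have "\<dots> \<le> (6 * ?L) * (14 * (2 * real N))"
  proof (rule mult_mono)
    show "real (2 * ?n + 1) \<le> 6 * ?L" using nf(2,3) by simp
    show "14 * real (2 ^ ?n) \<le> 14 * (2 * real N)" using nf(4) by simp
  qed (use nf(1) in auto)
  also have "\<dots> = 168 * real N * ?L" by simp
  finally show "real (min_obdd_size (interleaved_order ?n) (chi_E N l r)) \<le> 168 * real N * ?L" .
qed simp

end
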